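(* Let $\mathcal{N}=(D,P)$ be a broadcast network with client $P=(Q,I,\delta)$, let $F\subseteq Q$, and let $c_0$ be a configuration. There is a fair computation starting from $c_0$ if and only if there is a configuration $c$ with $c_0\to^* c$ and $c\Rightarrow_F c$.
   Context: A broadcast network is a pair $\mathcal{N}=(D,P)$ where $D$ is a finite set of messages and $P=(Q,I,\delta)$ is a finite automaton with $\delta\subseteq Q\times\mathrm{Ops}(D)\times Q$, $\mathrm{Ops}(D)=\{!a,\ ?a: a\in D\}$. A configuration is $c\in Q^k$ for some $k$, with entries $c[i]$. For $c,c'\in Q^k$ and $a\in D$, $c\xrightarrow{a}c'$ holds if there is $i$ with $(c[i],!a,c'[i])\in\delta$, a set $R\subseteq[1..k]\setminus\{i\}$ with $(c[j],?a,c'[j])\in\delta$ for $j\in R$, and $c[j]=c'[j]$ for $j\notin R\cup\{i\}$; then $\mathrm{type}(c\xrightarrow{a}c')=R\cup\{i\}$. $\to^*$ denotes zero or more transitions. For an infinite computation $\pi=c_0\to c_1\to\cdots$, $\mathrm{Inf}(\pi)=\{i: i\in\mathrm{type}(c_j\to c_{j+1})\text{ for infinitely many } j\}$ and $\mathrm{Fin}(\pi)=\{i: c_j[i]\in F\text{ for infinitely many } j\}$; $\pi$ is fair if $\mathrm{Inf}(\pi)\subseteq\mathrm{Fin}(\pi)$. A finite computation $c_1\to c_2\to\cdots\to c_n$ with $n\ge2$ is good for $F$, written $c_1\Rightarrow_F c_n$, if every client $i$ with $i\in\mathrm{type}(c_j\to c_{j+1})$ for some $j$ satisfies $c_k[i]\in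 F$ for some $k\in[1..n]$. *)

theory Defs
  imports Main
begin

datatype 'd op = Snd 'd | Rcv 'd

text \<open>A client automaton P = (Q, I, delta); a broadcast network (D, P).
 Clients are indexed 0..k-1 (the paper uses 1..k).\<close>
record ('q, 'd) client =
  states :: "'q set"
  init :: "'q set"
  delta :: "('q \<times> 'd op \<times> 'q) set"

definition network :: "'d set \<Rightarrow> ('q, 'd) client \<Rightarrow> bool" where
  "network D P \<longleftrightarrow> finite D \<and> finite (states P) \<and> init P \<subseteq> states P \<and>
     delta P \<subseteq> states P \<times> ((Snd ` D) \<union> (Rcv ` D)) \<times> states P"

definition is_config :: "('q, 'd) client \<Rightarrow> 'q list \<Rightarrow> bool" where
  "is_config P c \<longleftrightarrow> set c \<subseteq> states P"

definition step :: "'d set \<Rightarrow> ('q, 'd) client \<Rightarrow> 'q list \<Rightarrow> 'd \<Rightarrow> nat set \<Rightarrow> 'q list \<Rightarrow> bool" where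
  "step D P c a T c' \<longleftrightarrow> a \<in> D \<and> length c' = length c \<and>
     (\<exists>i R. i < length c \<and> R \<subseteq> {..<length c} - {i} \<and> T = R \<union> {i} \<and>
        (c ! i, Snd a, c' ! i) \<in> delta P \<and>
        (\<forall>j\<in>R. (c ! j, Rcv a, c' ! j) \<in> delta P) \<and>
        (\<forall>j<length c. j \<notin> T \<longrightarrow> c ! j = c' ! j))"

definition step_any :: "'d set \<Rightarrow> ('q, 'd) client \<Rightarrow> 'q list \<Rightarrow> 'q list \<Rightarrow> bool" where
  "step_any D P c c' \<longleftrightarrow> (\<exists>a T. step D P c a T c')"

definition inf_comp :: "'d set \<Rightarrow> ('q, 'd) client \<Rightarrow> (nat \<Rightarrow> 'q list) \<Rightarrow> (nat \<Rightarrow> nat set) \<Rightarrow> bool" where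
  "inf_comp D P cs ts \<longleftrightarrow> (\<forall>j. \<exists>a. step D P (cs j) a (ts j) (cs (Suc j)))"

definition Inf_set :: "(nat \<Rightarrow> nat set) \<Rightarrow> nat set" where
  "Inf_set ts = {i. infinite {j. i \<in> ts j}}"

definition Fin_set :: "'q set \<Rightarrow> (nat \<Rightarrow> 'q list) \<Rightarrow> nat set" where
  "Fin_set F cs = {i. infinite {j. i < length (cs j) \<and> cs j ! i \<in> F}}"

definition fair :: "'q set \<Rightarrow> (nat \<Rightarrow> 'q list) \<Rightarrow> (nat \<Rightarrow> nat set) \<Rightarrow> bool" where
  "fair F cs ts \<longleftrightarrow> Inf_set ts \<subseteq> Fin_set F cs"

definition good :: "'d set \<Rightarrow> ('q, 'd) client \<Rightarrow> 'q set \<Rightarrow> 'q list \<Rightarrow> 'q list \<Rightarrow> bool" where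
  "good D P F c c' \<longleftrightarrow> (\<exists>n cs ts. n \<ge> 1 \<and> cs 0 = c \<and> cs n = c' \<and>
      (\<forall>j<n. \<exists>a. step D P (cs j) a (ts j) (cs (Suc j))) \<and>
      (\<forall>i. (\<exists>j<n. i \<in> ts j) \<longrightarrow> (\<exists>k\<le>n. cs k ! i \<in> F)))"

end

theory Submission
  imports Defs "HOL-Library.Infinite_Set"
begin

lemma step_len: "step D P c a T c' \<Longrightarrow> length c' = length c"
  by (simp add: step_def)

lemma step_T: "step D P c a T c' \<Longrightarrow> T \<subseteq> {..<length c}"
  unfolding step_def by auto

lemma step_states:
  assumes net: "network D P" and s: "set c \<subseteq> states P" and st: "step D P c a T c'"
  shows "set c' \<subseteq> states P"
proof
  fix x assume "x \<in> set c'"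
  then obtain m where m: "m < length c'" "x = c' ! m" by (auto simp: in_set_conv_nth)
  from st obtain i R where l: "length c' = length c" and i: "i < length c" "R \<subseteq> {..<length c} - {i}"
    "T = R \<union> {i}" "(c ! i, Snd a, c' ! i) \<in> delta P"
    "\<forall>j\<in>R. (c ! j, Rcv a, c' ! j) \<in> delta P" "\<forall>j<length c. j \<notin> T \<longrightarrow> c ! j = c' ! j"
    unfolding step_def by blast
  have dl: "delta P \<subseteq> states P \<times> UNIV \<times> states P" using net unfolding network_def by blast
  show "x \<in> states P"
  proof (cases "m \<in> T")
    case True
    then have "m = i \<or> m \<in> R" using i by auto
    then show ?thesis using i dl m by auto
  next
    case False
    then have "c' ! m = c ! m" using i m l by auto
    then show ?thesis using s m l by (metis nth_mem subsetD)
  qed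
qed

lemma inf_comp_len: "inf_comp D P cs ts \<Longrightarrow> length (cs j) = length (cs 0)"
proof (induction j)
  case (Suc j)
  then obtain a where "step D P (cs j) a (ts j) (cs (Suc j))" unfolding inf_comp_def by blast
  with Suc show ?case using step_len by metis
qed simp

lemma inf_comp_states: "network D P \<Longrightarrow> set (cs 0) \<subseteq> states P \<Longrightarrow> inf_comp D P cs ts \<Longrightarrow> set (cs j) \<subseteq> states P"
proof (induction j)
  case (Suc j)
  then obtain a where "step D P (cs j) a (ts j) (cs (Suc j))" unfolding inf_comp_def by blast
  with Suc show ?case using step_states by metis
qed simp

lemma inf_comp_reach: "inf_comp D P cs ts \<Longrightarrow> (step_any D P)\<^sup>*\<^sup>* (cs 0) (cs j)"
proof (induction j)
  case 0 then show ?case by simp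
next
  case (Suc j)
  then have "step_any D P (cs j) (cs (Suc j))" unfolding inf_comp_def step_any_def by blast
  with Suc show ?case by (meson rtranclp.rtrancl_into_rtrancl)
qed

lemma fair_to_good:
  assumes net: "network D P" and cfg: "set (cs 0) \<subseteq> states P" and ic: "inf_comp D P cs ts"
    and fr: "fair F cs ts"
  shows "\<exists>c. (step_any D P)\<^sup>*\<^sup>* (cs 0) c \<and> good D P F c c"
proof -
  define k where "k = length (cs 0)"
  have len: "\<And>j. length (cs j) = k" using inf_comp_len[OF ic] k_def by simp
  have st: "\<And>j. set (cs j) \<subseteq> states P" using inf_comp_states[OF net cfg ic] .
  have tsk: "\<And>j. ts j \<subseteq> {..<k}" using ic len unfolding inf_comp_def by (metis step_T)
  define B where "B = (\<Union>i\<in>{..<k} - Inf_set ts. {j. i \<in> ts j})"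
  have "finite B" unfolding B_def Inf_set_def by auto
  then obtain N where N: "B \<subseteq> {..<N}" using finite_nat_bounded by blast
  have tsInf: "ts j \<subseteq> Inf_set ts" if "j \<ge> N" for j
  proof
    fix i assume i: "i \<in> ts j"
    show "i \<in> Inf_set ts"
    proof (rule ccontr)
      assume "i \<notin> Inf_set ts"
      with i tsk have "j \<in> B" unfolding B_def by blast
      with N that show False by auto
    qed
  qed
  have InfK: "Inf_set ts \<subseteq> {..<k}"
  proof
    fix i assume "i \<in> Inf_set ts"
    then have "{j. i \<in> ts j} \<noteq> {}" unfolding Inf_set_def by force
    then show "i \<in> {..<k}" using tsk by blast
  qed
  define S where "S = {c. set c \<subseteq> states P \<and> length c = k}"
  have "finite (states P)" using net unfolding network_def by simp
  then have "finite S" unfolding S_def by (rule finite_lists_length_eq)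
  moreover have "cs ` {N..} \<subseteq> S" unfolding S_def using len st by auto
  ultimately have "finite (cs ` {N..})" by (rule finite_subset[rotated])
  then obtain c where c: "infinite (cs -` {c} \<inter> {N..})"
    using inf_img_fin_dom'[of cs "{N..}"] infinite_Ici by blast
  define J where "J = cs -` {c} \<inter> {N..}"
  obtain j1 where j1: "j1 \<in> J" using c J_def by (metis finite.emptyI ex_in_conv)
  have "\<exists>w\<ge>j1. cs w ! i \<in> F" if "i \<in> Inf_set ts" for i
  proof -
    have "i \<in> Fin_set F cs" using fr that unfolding fair_def by blast
    then have "infinite {j. i < length (cs j) \<and> cs j ! i \<in> F}" unfolding Fin_set_def by simp
    then show ?thesis unfolding infinite_nat_iff_unbounded_le by blast
  qed
  then obtain W where W: "\<And>i. i \<in> Inf_set ts \<Longrightarrow> W i \<ge> j1 \<and> cs (W i) ! i \<in> F" by metis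
  have "finite (W ` Inf_set ts)" using InfK finite_subset by blast
  then obtain M where M: "W ` Inf_set ts \<subseteq> {..<M}" using finite_nat_bounded by blast
  obtain j2 where j2: "j2 \<ge> M + j1 + 1" "j2 \<in> J" using c J_def unfolding infinite_nat_iff_unbounded_le by blast
  have "good D P F (cs j1) (cs j1)"
    unfolding good_def
  proof (rule exI[of _ "j2 - j1"], rule exI[of _ "\<lambda>m. cs (j1 + m)"], rule exI[of _ "\<lambda>m. ts (j1 + m)"],
      intro conjI allI impI)
    show "1 \<le> j2 - j1" using j2 by simp
    show "cs (j1 + 0) = cs j1" by simp
    show "cs (j1 + (j2 - j1)) = cs j1" using j1 j2 J_def by simp
    show "\<exists>a. step D P (cs (j1 + j)) a (ts (j1 + j)) (cs (j1 + Suc j))" for j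
      using ic unfolding inf_comp_def by (metis add_Suc_right)
    fix i assume "\<exists>j<j2 - j1. i \<in> ts (j1 + j)"
    then obtain j where "i \<in> ts (j1 + j)" by blast
    moreover have "j1 + j \<ge> N" using j1 J_def by simp
    ultimately have iI: "i \<in> Inf_set ts" using tsInf by blast
    show "\<exists>k\<le>j2 - j1. cs (j1 + k) ! i \<in> F"
      using W[OF iI] M iI j2 by (intro exI[of _ "W i - j1"]) auto
  qed
  then show ?thesis using inf_comp_reach[OF ic] by blast
qed


lemma shift_infinite:
  "infinite {j. Q (case j of 0 \<Rightarrow> a | Suc m \<Rightarrow> f m)} \<longleftrightarrow> infinite {j. Q (f j)}"
proof -
  have "{j. Q (case j of 0 \<Rightarrow> a | Suc m \<Rightarrow> f m)} = (if Q a then {0} else {}) \<union> Suc ` {j. Q (f j)}"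
  proof (intro equalityI subsetI)
    fix x assume "x \<in> {j. Q (case j of 0 \<Rightarrow> a | Suc m \<Rightarrow> f m)}"
    then show "x \<in> (if Q a then {0} else {}) \<union> Suc ` {j. Q (f j)}"
      by (cases x) auto
  qed (auto split: if_splits)
  then show ?thesis by (simp add: finite_image_iff)
qed

lemma prepend_fair:
  assumes "step D P c0 a T (cs 0)" and "inf_comp D P cs ts" and "fair F cs ts"
  shows "\<exists>cs' ts'. cs' 0 = c0 \<and> inf_comp D P cs' ts' \<and> fair F cs' ts'"
proof (intro exI conjI)
  let ?cs = "\<lambda>j. case j of 0 \<Rightarrow> c0 | Suc m \<Rightarrow> cs m"
  let ?ts = "\<lambda>j. case j of 0 \<Rightarrow> T | Suc m \<Rightarrow> ts m"
  show "?cs 0 = c0" by simp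
  show "inf_comp D P ?cs ?ts" using assms unfolding inf_comp_def
    by (auto split: nat.splits)
  have "i \<in> Inf_set ?ts \<longleftrightarrow> i \<in> Inf_set ts" for i unfolding Inf_set_def
    using shift_infinite[of "\<lambda>x. i \<in> x" T ts] by simp
  then have "Inf_set ?ts = Inf_set ts" by blast
  moreover have "i \<in> Fin_set F ?cs \<longleftrightarrow> i \<in> Fin_set F cs" for i unfolding Fin_set_def
    using shift_infinite[of "\<lambda>x. i < length x \<and> x ! i \<in> F" c0 cs] by simp
  then have "Fin_set F ?cs = Fin_set F cs" by blast
  ultimately show "fair F ?cs ?ts" using assms unfolding fair_def by simp
qed

lemma mod_loop: "(cs 0 :: 'a) = cs n \<Longrightarrow> cs (Suc j mod n) = cs (Suc (j mod n))"
  by (simp add: mod_Suc)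

lemma good_fair:
  assumes g: "good D P F c c"
  shows "\<exists>cs ts. cs 0 = c \<and> inf_comp D P cs ts \<and> fair F cs ts"
proof -
  obtain n cs ts where n: "n \<ge> 1" and c0: "cs 0 = c" and cn: "cs n = c"
    and stp: "\<forall>j<n. \<exists>a. step D P (cs j) a (ts j) (cs (Suc j))"
    and gd: "\<forall>i. (\<exists>j<n. i \<in> ts j) \<longrightarrow> (\<exists>k\<le>n. cs k ! i \<in> F)"
    using g unfolding good_def by blast
  let ?cs = "\<lambda>j. cs (j mod n)"
  let ?ts = "\<lambda>j. ts (j mod n)"
  have ic: "inf_comp D P ?cs ?ts" unfolding inf_comp_def
  proof
    fix j
    have "j mod n < n" using n by simp
    then have "\<exists>a. step D P (cs (j mod n)) a (ts (j mod n)) (cs (Suc (j mod n)))" using stp by blast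
    moreover have "cs (Suc j mod n) = cs (Suc (j mod n))" by (rule mod_loop) (simp add: c0 cn)
    ultimately show "\<exists>a. step D P (?cs j) a (?ts j) (?cs (Suc j))" by simp
  qed
  have len: "length (?cs j) = length (?cs 0)" for j using inf_comp_len[OF ic] .
  have "fair F ?cs ?ts" unfolding fair_def
  proof
    fix i assume "i \<in> Inf_set ?ts"
    then have "infinite {j. i \<in> ts (j mod n)}" unfolding Inf_set_def by simp
    then have "{j. i \<in> ts (j mod n)} \<noteq> {}" by (intro notI) simp
    then obtain j where j: "i \<in> ts (j mod n)" by blast
    have jn: "j mod n < n" using n by simp
    then obtain k where k: "k \<le> n" "cs k ! i \<in> F" using gd j by blast
    have ck: "cs (k mod n) = cs k"
    proof (cases "k = n")
      case True then show ?thesis using c0 cn by simp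
    next
      case False then show ?thesis using k(1) by simp
    qed
    obtain a where "step D P (cs (j mod n)) a (ts (j mod n)) (cs (Suc (j mod n)))" using stp jn by blast
    then have "ts (j mod n) \<subseteq> {..<length (cs (j mod n))}" by (rule step_T)
    then have "i < length (?cs j)" using j by auto
    then have il: "i < length (?cs 0)" using len[of j] by simp
    have "range (\<lambda>m. k mod n + n * m) \<subseteq> {j. i < length (?cs j) \<and> ?cs j ! i \<in> F}"
    proof
      fix x assume "x \<in> range (\<lambda>m. k mod n + n * m)"
      then obtain m where x: "x = k mod n + n * m" by blast
      have "x mod n = k mod n" unfolding x by simp
      then show "x \<in> {j. i < length (?cs j) \<and> ?cs j ! i \<in> F}"
        using ck k(2) il len[of x] by simp
    qed
    moreover have "infinite (range (\<lambda>m. k mod n + n * m))"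
      using n by (intro range_inj_infinite) (auto simp: inj_on_def)
    ultimately show "i \<in> Fin_set F ?cs" unfolding Fin_set_def using finite_subset by blast
  qed
  then show ?thesis using ic c0 by (intro exI[of _ ?cs] exI[of _ ?ts]) simp
qed

lemma reach_fair:
  assumes "(step_any D P)\<^sup>*\<^sup>* c0 c" and "good D P F c c"
  shows "\<exists>cs ts. cs 0 = c0 \<and> inf_comp D P cs ts \<and> fair F cs ts"
  using assms(1)
proof (induction rule: converse_rtranclp_induct)
  case base then show ?case using good_fair[OF assms(2)] .
next
  case (step y z)
  then obtain cs ts where "cs 0 = z" "inf_comp D P cs ts" "fair F cs ts" by blast
  moreover obtain a T where "step D P y a T z" using step(1) unfolding step_any_def by blast
  ultimately show ?case using prepend_fair[of D P y a T cs ts F] by simp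
qed

theorem lemma6:
  fixes D :: "'d set" and P :: "('q, 'd) client" and F :: "'q set" and c0 :: "'q list"
  assumes "network D P" and "F \<subseteq> states P" and "is_config P c0"
  shows "(\<exists>cs ts. cs 0 = c0 \<and> inf_comp D P cs ts \<and> fair F cs ts) \<longleftrightarrow>
         (\<exists>c. (step_any D P)\<^sup>*\<^sup>* c0 c \<and> good D P F c c)"
proof
  assume "\<exists>cs ts. cs 0 = c0 \<and> inf_comp D P cs ts \<and> fair F cs ts"
  then obtain cs ts where "cs 0 = c0" "inf_comp D P cs ts" "fair F cs ts" by blast
  moreover have "set (cs 0) \<subseteq> states P" using assms(3) \<open>cs 0 = c0\<close> unfolding is_config_def by simp
  ultimately show "\<exists>c. (step_any D P)\<^sup>*\<^sup>* c0 c \<and> good D P F c c"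
    using fair_to_good[OF assms(1)] by blast
next
  assume "\<exists>c. (step_any D P)\<^sup>*\<^sup>* c0 c \<and> good D P F c c"
  then show "\<exists>cs ts. cs 0 = c0 \<and> inf_comp D P cs ts \<and> fair F cs ts" using reach_fair by blast
qed

end
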